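(* Suppose $f:\{0,1\}^n\to\mathbb{R}$ is submodular and $f(0)>0$. Then there are at least $2^{n-1}$ points $x\in\{0,1\}^n$ such that $f(x)\neq 0$.
   Context: $f$ is submodular if $f(x+\mathbf{e}_i)-f(x)\ge f(y+\mathbf{e}_i)-f(y)$ for all $i$ and all $x\le y$ (coordinatewise) with $x_i=y_i=0$, where $\mathbf{e}_i$ is the $i$-th standard basis vector. *)

theory Defs
  imports "HOL-Analysis.Analysis"
begin

text \<open>The Boolean cube {0,1}^n: functions nat => nat with values in {0,1} on
coordinates 0..n-1 and value 0 outside (so the representation is unique).\<close>
definition cube :: "nat \<Rightarrow> (nat \<Rightarrow> nat) set" where
  "cube n = {x. (\<forall>i<n. x i \<in> {0, 1}) \<and> (\<forall>i\<ge>n. x i = 0)}"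

definition unit_vec :: "nat \<Rightarrow> nat \<Rightarrow> nat" where
  "unit_vec i = (\<lambda>j. if j = i then 1 else 0)"

definition submodular :: "nat \<Rightarrow> ((nat \<Rightarrow> nat) \<Rightarrow> real) \<Rightarrow> bool" where
  "submodular n f \<longleftrightarrow>
     (\<forall>i<n. \<forall>x\<in>cube n. \<forall>y\<in>cube n.
        x \<le> y \<and> x i = 0 \<and> y i = 0 \<longrightarrow>
        f (\<lambda>j. x j + unit_vec i j) - f x \<ge> f (\<lambda>j. y j + unit_vec i j) - f y)"

end

theory Submission
  imports Defs
begin

definition Sub :: "nat \<Rightarrow> nat \<Rightarrow> (nat \<Rightarrow> nat) \<Rightarrow> (nat \<Rightarrow> nat) set" where
  "Sub n k z = {x \<in> cube n. \<forall>j\<ge>k. x j = z j}"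

definition shf :: "nat \<Rightarrow> (nat \<Rightarrow> nat) \<Rightarrow> (nat \<Rightarrow> nat)" where
  "shf k x = (\<lambda>j. x j + unit_vec k j)"

lemma finite_cube: "finite (cube n)"
proof -
  have "cube n \<subseteq> (\<lambda>s j. if j \<in> s then 1 else 0) ` Pow {..<n}"
  proof
    fix x assume x: "x \<in> cube n"
    have "x = (\<lambda>j. if j \<in> {j. j < n \<and> x j = 1} then 1 else 0)"
    proof
      fix j show "x j = (if j \<in> {j. j < n \<and> x j = 1} then 1 else 0)"
        using x unfolding cube_def by (cases "j < n") auto
    qed
    then show "x \<in> (\<lambda>s j. if j \<in> s then 1 else 0) ` Pow {..<n}" by blast
  qed
  then show ?thesis by (rule finite_subset) auto
qed

lemma finite_Sub: "finite (Sub n k z)"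
  unfolding Sub_def using finite_cube by auto

lemma shf_cube: "x \<in> cube n \<Longrightarrow> k < n \<Longrightarrow> x k = 0 \<Longrightarrow> shf k x \<in> cube n"
  unfolding cube_def shf_def unit_vec_def by auto

lemma split_Sub:
  assumes z: "z \<in> cube n" "\<forall>j<Suc k. z j = 0" and k: "k < n"
  shows "Sub n (Suc k) z = Sub n k z \<union> Sub n k (shf k z)"
    and "Sub n k z \<inter> Sub n k (shf k z) = {}"
    and "Sub n k (shf k z) = shf k ` Sub n k z"
    and "inj_on (shf k) (Sub n k z)"
    and "\<forall>x\<in>Sub n k z. x k = 0"
proof -
  show "\<forall>x\<in>Sub n k z. x k = 0" using z unfolding Sub_def by auto
  show "Sub n k z \<inter> Sub n k (shf k z) = {}"
    using z unfolding Sub_def shf_def unit_vec_def by force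
  show "inj_on (shf k) (Sub n k z)"
    unfolding inj_on_def shf_def
  proof (intro ballI impI ext)
    fix x y j assume "(\<lambda>j. x j + unit_vec k j) = (\<lambda>j. y j + unit_vec k j)"
    then have "x j + unit_vec k j = y j + unit_vec k j" by meson
    then show "x j = y j" by simp
  qed
  show "Sub n k (shf k z) = shf k ` Sub n k z"
  proof
    show "Sub n k (shf k z) \<subseteq> shf k ` Sub n k z"
    proof
      fix x assume x: "x \<in> Sub n k (shf k z)"
      define y where "y = (\<lambda>j. if j = k then 0 else x j)"
      have "x k = 1" using x z unfolding Sub_def shf_def unit_vec_def by auto
      then have "x = shf k y" unfolding y_def shf_def unit_vec_def by auto
      moreover have "y \<in> Sub n k z"
        using x z unfolding Sub_def y_def shf_def unit_vec_def cube_def by auto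
      ultimately show "x \<in> shf k ` Sub n k z" by blast
    qed
    show "shf k ` Sub n k z \<subseteq> Sub n k (shf k z)"
    proof
      fix x assume "x \<in> shf k ` Sub n k z"
      then obtain y where y: "y \<in> Sub n k z" "x = shf k y" by blast
      then have "y k = 0" using z unfolding Sub_def by auto
      then show "x \<in> Sub n k (shf k z)"
        using y z k shf_cube[of y n k] unfolding Sub_def by (auto simp: shf_def)
    qed
  qed
  show "Sub n (Suc k) z = Sub n k z \<union> Sub n k (shf k z)"
  proof
    show "Sub n (Suc k) z \<subseteq> Sub n k z \<union> Sub n k (shf k z)"
    proof
      fix x assume x: "x \<in> Sub n (Suc k) z"
      then have "x k \<in> {0,1}" using k unfolding Sub_def cube_def by auto
      have xj: "\<forall>j>k. x j = z j" using x unfolding Sub_def by (auto simp: Suc_le_eq)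
      have xc: "x \<in> cube n" using x unfolding Sub_def by auto
      show "x \<in> Sub n k z \<union> Sub n k (shf k z)"
      proof (cases "x k = 0")
        case True
        have "\<forall>j\<ge>k. x j = z j"
        proof (intro allI impI)
          fix j assume "k \<le> j"
          then show "x j = z j" using xj True z(2) by (cases "j = k") auto
        qed
        then have "x \<in> Sub n k z" using xc unfolding Sub_def by blast
        then show ?thesis by blast
      next
        case False
        then have "x k = 1" using \<open>x k \<in> {0,1}\<close> by auto
        have "\<forall>j\<ge>k. x j = shf k z j"
        proof (intro allI impI)
          fix j assume "k \<le> j"
          then show "x j = shf k z j" using xj \<open>x k = 1\<close> z(2) unfolding shf_def unit_vec_def
            by (cases "j = k") auto
        qed
        then have "x \<in> Sub n k (shf k z)" using xc unfolding Sub_def by blast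
        then show ?thesis by blast
      qed
    qed
    show "Sub n k z \<union> Sub n k (shf k z) \<subseteq> Sub n (Suc k) z"
      using z unfolding Sub_def shf_def unit_vec_def by auto
  qed
qed

lemma card_Sub:
  "k \<le> n \<Longrightarrow> z \<in> cube n \<Longrightarrow> \<forall>j<k. z j = 0 \<Longrightarrow> card (Sub n k z) = 2 ^ k"
proof (induction k arbitrary: z)
  case 0
  have "Sub n 0 z = {z}" using 0 unfolding Sub_def by auto
  then show ?case by simp
next
  case (Suc k)
  have k: "k < n" using Suc by simp
  note sp = split_Sub[OF Suc.prems(2) Suc.prems(3) k]
  have zk: "z k = 0" using Suc.prems by auto
  have c1: "card (Sub n k z) = 2 ^ k" using Suc by auto
  have "card (Sub n k (shf k z)) = 2 ^ k"
    using sp(3) sp(4) c1 card_image by metis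
  then show ?case using sp(1) sp(2) c1 finite_Sub card_Un_disjoint by (simp add: card_Un_disjoint)
qed

lemma main:
  assumes sm: "submodular n f"
  shows "k \<le> n \<Longrightarrow> z \<in> cube n \<Longrightarrow> \<forall>j<k. z j = 0 \<Longrightarrow> f z > 0 \<Longrightarrow>
    card {x \<in> Sub n k z. f x \<noteq> 0} \<ge> 2 ^ (k - 1)"
proof (induction k arbitrary: z)
  case 0
  have "{x \<in> Sub n 0 z. f x \<noteq> 0} = {z}" using 0 unfolding Sub_def by auto
  then show ?case by simp
next
  case (Suc k)
  have k: "k < n" using Suc by simp
  note sp = split_Sub[OF Suc.prems(2) Suc.prems(3) k]
  have zk: "z k = 0" using Suc.prems by auto
  define A where "A = {x \<in> Sub n k z. f x \<noteq> 0}"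
  define B where "B = {x \<in> Sub n k (shf k z). f x \<noteq> 0}"
  have eq: "{x \<in> Sub n (Suc k) z. f x \<noteq> 0} = A \<union> B" using sp(1) unfolding A_def B_def by auto
  have fin: "finite A" "finite B" unfolding A_def B_def using finite_Sub by auto
  have dis: "A \<inter> B = {}" using sp(2) unfolding A_def B_def by auto
  have cAB: "card (A \<union> B) = card A + card B" using fin dis card_Un_disjoint by blast
  have cA: "card A \<ge> 2 ^ (k - 1)" using Suc unfolding A_def by auto
  show ?case
  proof (cases "f (shf k z) > 0")
    case True
    have zc: "shf k z \<in> cube n" using shf_cube[OF Suc.prems(2) k zk] .
    have "\<forall>j<k. shf k z j = 0" using Suc.prems(3) unfolding shf_def unit_vec_def by auto
    then have cB: "card B \<ge> 2 ^ (k - 1)" using Suc.IH[OF _ zc _ True] k unfolding B_def by auto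
    have "(2::nat) ^ k \<le> 2 ^ (k - 1) + 2 ^ (k - 1)"
      by (cases k) auto
    then show ?thesis using eq cAB cA cB by simp
  next
    case False
    have nz: "f x \<noteq> 0 \<or> f (shf k x) \<noteq> 0" if x: "x \<in> Sub n k z" for x
    proof -
      have xc: "x \<in> cube n" and xk: "x k = 0" using x sp(5) unfolding Sub_def by auto
      have "z \<le> x" unfolding le_fun_def
      proof
        fix j show "z j \<le> x j"
          using x Suc.prems(3) unfolding Sub_def by (cases "j < k") auto
      qed
      then have "f (shf k z) - f z \<ge> f (shf k x) - f x"
        using sm k Suc.prems(2) xc zk xk unfolding submodular_def shf_def by blast
      then show ?thesis using False Suc.prems(4) by auto
    qed
    define g where "g x = (if f x \<noteq> 0 then x else shf k x)" for x
    have gi: "g ` Sub n k z \<subseteq> A \<union> B"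
    proof
      fix y assume "y \<in> g ` Sub n k z"
      then obtain x where x: "x \<in> Sub n k z" "y = g x" by blast
      have "shf k x \<in> Sub n k (shf k z)" using sp(3) x(1) by blast
      then show "y \<in> A \<union> B" using x nz[OF x(1)] unfolding g_def A_def B_def by auto
    qed
    have ginj: "inj_on g (Sub n k z)"
    proof (rule inj_onI)
      fix x y assume x: "x \<in> Sub n k z" and y: "y \<in> Sub n k z" and e: "g x = g y"
      have xk: "x k = 0" "y k = 0" using x y sp(5) by auto
      have sk: "shf k x k = 1" "shf k y k = 1" using xk unfolding shf_def unit_vec_def by auto
      show "x = y"
      proof (cases "f x \<noteq> 0"; cases "f y \<noteq> 0")
        assume "f x \<noteq> 0" "f y \<noteq> 0" then show ?thesis using e unfolding g_def by simp
      next
        assume "f x \<noteq> 0" "\<not> f y \<noteq> 0" then have "x = shf k y" using e unfolding g_def by simp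
        then show ?thesis using xk sk by simp
      next
        assume "\<not> f x \<noteq> 0" "f y \<noteq> 0" then have "shf k x = y" using e unfolding g_def by simp
        then show ?thesis using xk sk by simp
      next
        assume "\<not> f x \<noteq> 0" "\<not> f y \<noteq> 0" then have "shf k x = shf k y" using e unfolding g_def by simp
        then show ?thesis using sp(4) x y unfolding inj_on_def by blast
      qed
    qed
    have "card (Sub n k z) \<le> card (A \<union> B)"
      using card_inj_on_le[OF ginj gi] fin by blast
    moreover have "card (Sub n k z) = 2 ^ k"
      using card_Sub[of k n z] Suc.prems k by auto
    ultimately show ?thesis using eq by simp
  qed
qed

theorem lemma6:
  fixes n :: nat and f :: "(nat \<Rightarrow> nat) \<Rightarrow> real"
  assumes "submodular n f"
    and "f (\<lambda>_. 0) > 0"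
  shows "card {x \<in> cube n. f x \<noteq> 0} \<ge> 2 ^ (n - 1)"
proof -
  have z: "(\<lambda>_. 0) \<in> cube n" unfolding cube_def by auto
  have "Sub n n (\<lambda>_. 0) = cube n" unfolding Sub_def cube_def by auto
  then show ?thesis using main[OF assms(1) le_refl z _ assms(2)] by auto
qed

end
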